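(* For every integer $k\ge 1$ let $P_k$ be the $2^k\times 2^k$ matrix with $(i,j)$-entry $1$ if there is $n\in\{1,\dots,2^k\}$ with $i=\sigma^{-1}_{2^k}(n+1)$ and $j=\sigma^{-1}_{2^k}(n)$ (convention $\sigma^{-1}_{2^k}(2^k+1)=\sigma^{-1}_{2^k}(1)$), and $0$ otherwise. Define matrices $N_k$ by $N_1=I^*_2$, $N_2=\begin{pmatrix}0 & I_2\\ I^*_2 & 0\end{pmatrix}$ and, for $k\ge 3$, $$N_k=\begin{pmatrix}0_{2^{k-1}} & \begin{pmatrix} N_{k-2} & 0\\ 0 & I_{2^{k-2}}\end{pmatrix}\\ I^*_{2^{k-1}} & 0_{2^{k-1}}\end{pmatrix},$$ all blocks in the outer matrix being of size $2^{k-1}\times 2^{k-1}$. That is, the matrix has the nested form: its lower-left $2^{k-1}$ block is $I^*_{2^{k-1}}$, its upper-right $2^{k-1}$ block is block-diagonal with lower diagonal block $I_{2^{k-2}}$ and upper diagonal block of the same nested form of size $2^{k-2}$, and so on, the innermost block being $\begin{pmatrix}0&I_2\\ I^*_2&0\end{pmatrix}$ when $k$ is even and $I^*_2=\begin{pmatrix}0&1\\1&0\end{pmatrix}$ when $k$ is odd. Then $P_k=N_k$ for every $k\ge 1$.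
   Context: For every integer $k\ge 0$ the map $\sigma^{-1}_{2^k}:\{1,\dots,2^k\}\to\{1,\dots,2^k\}$ is defined recursively by $\sigma^{-1}_{2^0}(1)=1$ and, for $k\ge 1$ and $1\le n\le 2^{k-1}$, $\sigma^{-1}_{2^k}(2n-1)=\sigma^{-1}_{2^{k-1}}(n)$ and $\sigma^{-1}_{2^k}(2n)=2^k+1-\sigma^{-1}_{2^{k-1}}(n)$; it is a permutation of $\{1,\dots,2^k\}$ (the inverse of the permutation encoding the ordering of the superstable $2^k$-periodic orbit of a period-doubling cascade of a unimodal map). The matrix $P_k$ is called the matrix representation of the period-doubling cascade. For $r\ge 1$, $I_r$ is the $r\times r$ identity matrix, $0_r$ the $r\times r$ zero matrix, and $I^*_r=(a_{ij})$ the $r\times r$ matrix with $a_{ij}=1$ if $i+j=r+1$ and $a_{ij}=0$ otherwise. *)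

theory Defs
  imports "Jordan_Normal_Form.Matrix"
begin

text \<open>sigma_inv k n is the paper's inverse permutation of order 2^k, evaluated at n in 1..2^k
  (1-based).  Values outside 1..2^k are irrelevant.\<close>
fun sigma_inv :: "nat \<Rightarrow> nat \<Rightarrow> nat" where
  "sigma_inv 0 n = 1"
| "sigma_inv (Suc k) n =
     (if odd n then sigma_inv k ((n + 1) div 2)
      else 2 ^ Suc k + 1 - sigma_inv k (n div 2))"

definition sigma_inv_cyc :: "nat \<Rightarrow> nat \<Rightarrow> nat" where
  "sigma_inv_cyc k n = (if n = 2 ^ k + 1 then sigma_inv k 1 else sigma_inv k n)"

text \<open>Matrices are 0-indexed in Jordan_Normal_Form; entry (i,j) of the library matrix is the
  paper's entry (i+1, j+1).\<close>
definition P_mat :: "nat \<Rightarrow> int mat" where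
  "P_mat k = mat (2 ^ k) (2 ^ k) (\<lambda>(i, j).
     if \<exists>n \<in> {1..2 ^ k}. i + 1 = sigma_inv_cyc k (n + 1) \<and> j + 1 = sigma_inv k n
     then 1 else 0)"

definition anti_id :: "nat \<Rightarrow> int mat" where
  "anti_id r = mat r r (\<lambda>(i, j). if (i + 1) + (j + 1) = r + 1 then 1 else 0)"

fun N_mat :: "nat \<Rightarrow> int mat" where
  "N_mat 0 = 1\<^sub>m 1"
| "N_mat (Suc 0) = anti_id 2"
| "N_mat (Suc (Suc 0)) = four_block_mat (0\<^sub>m 2 2) (1\<^sub>m 2) (anti_id 2) (0\<^sub>m 2 2)"
| "N_mat (Suc (Suc (Suc k))) =
     four_block_mat (0\<^sub>m (2 ^ (k + 2)) (2 ^ (k + 2)))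
       (four_block_mat (N_mat (Suc k)) (0\<^sub>m (2 ^ (k + 1)) (2 ^ (k + 1)))
                       (0\<^sub>m (2 ^ (k + 1)) (2 ^ (k + 1))) (1\<^sub>m (2 ^ (k + 1))))
       (anti_id (2 ^ (k + 2))) (0\<^sub>m (2 ^ (k + 2)) (2 ^ (k + 2)))"

end

theory Submission
  imports Defs
begin

fun g :: "nat \<Rightarrow> nat \<Rightarrow> nat" where
  "g 0 x = 1"
| "g (Suc k) x = (if x \<le> 2 ^ k then 2 ^ Suc k + 1 - x else g k (2 ^ Suc k + 1 - x))"

lemma s_range: "n \<in> {1..2^k} \<Longrightarrow> sigma_inv k n \<in> {1..2^k}"
proof (induction k arbitrary: n)
  case 0 then show ?case by simp
next
  case (Suc k)
  show ?case
  proof (cases "odd n")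
    case True
    have "n \<noteq> 2^Suc k" using True by auto
    then have "(n+1) div 2 \<in> {1..2^k}" using Suc.prems True by auto
    then show ?thesis using Suc.IH True by force
  next
    case False
    have "n div 2 \<in> {1..2^k}" using Suc.prems False by auto
    then have "sigma_inv k (n div 2) \<in> {1..2^k}" using Suc.IH by blast
    then show ?thesis using False by auto
  qed
qed

lemma g_range: "x \<in> {1..2^k} \<Longrightarrow> g k x \<in> {1..2^k}"
proof (induction k arbitrary: x)
  case 0 then show ?case by simp
next
  case (Suc k)
  show ?case
  proof (cases "x \<le> 2^k")
    case True then show ?thesis using Suc.prems by auto
  next
    case False
    have "2 ^ Suc k + 1 - x \<in> {1..2^k}" using Suc.prems False by auto
    then have "g k (2 ^ Suc k + 1 - x) \<in> {1..2^k}" using Suc.IH by blast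
    then show ?thesis using False by auto
  qed
qed

lemma s_surj: "x \<in> {1..2^k} \<Longrightarrow> \<exists>n\<in>{1..2^k}. sigma_inv k n = x"
proof (induction k arbitrary: x)
  case 0 then show ?case by auto
next
  case (Suc k)
  show ?case
  proof (cases "x \<le> 2^k")
    case True
    then obtain n where n: "n \<in> {1..2^k}" "sigma_inv k n = x" using Suc.IH Suc.prems by force
    have "sigma_inv (Suc k) (2*n - 1) = x" using n
      by (simp add: odd_pos)
    moreover have "2*n - 1 \<in> {1..2^Suc k}" using n by auto
    ultimately show ?thesis by blast
  next
    case False
    then obtain n where n: "n \<in> {1..2^k}" "sigma_inv k n = 2 ^ Suc k + 1 - x"
      using Suc.IH[of "2 ^ Suc k + 1 - x"] Suc.prems by force
    have "sigma_inv (Suc k) (2*n) = x" using n False Suc.prems by auto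
    moreover have "2*n \<in> {1..2^Suc k}" using n by auto
    ultimately show ?thesis by blast
  qed
qed

lemma s_next: "n \<in> {1..2^k} \<Longrightarrow> sigma_inv_cyc k (n+1) = g k (sigma_inv k n)"
proof (induction k arbitrary: n)
  case 0 then show ?case by (simp add: sigma_inv_cyc_def)
next
  case (Suc k)
  show ?case
  proof (cases "odd n")
    case True
    define m where "m = (n+1) div 2"
    have "n \<noteq> 2^Suc k" using True by auto
    then have m: "n = 2*m - 1" "m \<in> {1..2^k}" using Suc.prems True unfolding m_def
      by auto
    have sr: "sigma_inv k m \<in> {1..2^k}" using s_range m by blast
    have a: "sigma_inv (Suc k) n = sigma_inv k m" using m True by auto
    have b: "sigma_inv_cyc (Suc k) (n+1) = 2 ^ Suc k + 1 - sigma_inv k m"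
      using m unfolding sigma_inv_cyc_def by auto
    show ?thesis using a b sr by simp
  next
    case False
    then obtain m where m: "n = 2*m" "m \<in> {1..2^k}" using Suc.prems by auto
    have sr: "sigma_inv k m \<in> {1..2^k}" using s_range m by blast
    have a: "sigma_inv (Suc k) n = 2 ^ Suc k + 1 - sigma_inv k m" using m by auto
    have ga: "g (Suc k) (sigma_inv (Suc k) n) = g k (sigma_inv k m)"
      using a sr by auto
    have c: "sigma_inv_cyc (Suc k) (n+1) = sigma_inv_cyc k (m+1)"
    proof (cases "m = 2^k")
      case True then show ?thesis using m unfolding sigma_inv_cyc_def by auto
    next
      case False
      then have "m + 1 \<noteq> 2^k + 1" "2*m+1 \<noteq> 2^Suc k + 1" by auto
      then show ?thesis using m unfolding sigma_inv_cyc_def by auto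
    qed
    show ?thesis using c ga Suc.IH[OF m(2)] by simp
  qed
qed

definition G :: "nat \<Rightarrow> int mat" where
  "G k = mat (2^k) (2^k) (\<lambda>(i,j). if i + 1 = g k (j+1) then 1 else 0)"

lemma P_G: "P_mat k = G k"
proof (rule eq_matI)
  show "dim_row (P_mat k) = dim_row (G k)" "dim_col (P_mat k) = dim_col (G k)"
    by (simp_all add: P_mat_def G_def)
  fix i j assume ij: "i < dim_row (G k)" "j < dim_col (G k)"
  then have ij': "i < 2^k" "j < 2^k" by (auto simp: G_def)
  have "(\<exists>n \<in> {1..2 ^ k}. i + 1 = sigma_inv_cyc k (n + 1) \<and> j + 1 = sigma_inv k n)
        \<longleftrightarrow> i + 1 = g k (j+1)"
  proof
    assume "\<exists>n \<in> {1..2 ^ k}. i + 1 = sigma_inv_cyc k (n + 1) \<and> j + 1 = sigma_inv k n"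
    then show "i + 1 = g k (j+1)" using s_next by force
  next
    assume h: "i + 1 = g k (j+1)"
    obtain n where "n\<in>{1..2^k}" "sigma_inv k n = j+1" using s_surj[of "j+1" k] ij' by auto
    then show "\<exists>n \<in> {1..2 ^ k}. i + 1 = sigma_inv_cyc k (n + 1) \<and> j + 1 = sigma_inv k n"
      using s_next h by force
  qed
  then show "P_mat k $$ (i, j) = G k $$ (i, j)"
    using ij' by (simp add: P_mat_def G_def)
qed

lemma N_G1: "N_mat 1 = G 1"
proof (rule eq_matI)
  fix i j assume "i < dim_row (G 1)" "j < dim_col (G 1)"
  then have "i < 2" "j < 2" by (auto simp: G_def)
  then have "(i = 0 \<or> i = 1) \<and> (j = 0 \<or> j = 1)" by auto
  then show "N_mat 1 $$ (i, j) = G 1 $$ (i, j)"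
    by (auto simp: G_def anti_id_def)
qed (auto simp: G_def anti_id_def)

lemma N_G2: "N_mat 2 = G 2"
proof (rule eq_matI)
  fix i j assume "i < dim_row (G 2)" "j < dim_col (G 2)"
  then have "i < 4" "j < 4" by (auto simp: G_def)
  then have "(i = 0 \<or> i = 1 \<or> i = 2 \<or> i = 3) \<and> (j = 0 \<or> j = 1 \<or> j = 2 \<or> j = 3)" by auto
  then show "N_mat 2 $$ (i, j) = G 2 $$ (i, j)"
    by (auto simp: G_def anti_id_def numeral_eq_Suc)
qed (auto simp: G_def anti_id_def numeral_eq_Suc)

lemma N_G_step:
  assumes IH: "N_mat (Suc k) = G (Suc k)"
  shows "N_mat (Suc (Suc (Suc k))) = G (Suc (Suc (Suc k)))"
proof -
  define Q :: nat where "Q = 2^(k+1)"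
  define H :: nat where "H = 2^(k+2)"
  have HQ: "H = 2*Q" by (simp add: H_def Q_def)
  have Q1: "Q \<ge> 1" by (simp add: Q_def)
  have g3: "g (Suc (Suc (Suc k))) x = (if x \<le> H then 2*H + 1 - x else g (Suc (Suc k)) (2*H+1-x))" for x
    by (simp add: H_def)
  have g2: "g (Suc (Suc k)) x = (if x \<le> Q then H + 1 - x else g (Suc k) (H+1-x))" for x
    by (simp add: H_def Q_def)
  have G3: "G (Suc (Suc (Suc k))) = mat (2*H) (2*H) (\<lambda>(i,j). if i + 1 = g (Suc (Suc (Suc k))) (j+1) then 1 else 0)"
    by (simp add: G_def H_def)
  have G1: "G (Suc k) = mat Q Q (\<lambda>(i,j). if i + 1 = g (Suc k) (j+1) then 1 else 0)"
    by (simp add: G_def Q_def)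
  have N3: "N_mat (Suc (Suc (Suc k))) = four_block_mat (0\<^sub>m H H)
       (four_block_mat (G (Suc k)) (0\<^sub>m Q Q) (0\<^sub>m Q Q) (1\<^sub>m Q))
       (anti_id H) (0\<^sub>m H H)"
    using IH by (simp add: H_def Q_def)
  show ?thesis
  proof (rule eq_matI)
    show "dim_row (N_mat (Suc (Suc (Suc k)))) = dim_row (G (Suc (Suc (Suc k))))"
         "dim_col (N_mat (Suc (Suc (Suc k)))) = dim_col (G (Suc (Suc (Suc k))))"
      unfolding N3 G3 by (simp_all add: G1 anti_id_def HQ)
    fix i j assume "i < dim_row (G (Suc (Suc (Suc k))))" "j < dim_col (G (Suc (Suc (Suc k))))"
    then have ij: "i < 2*H" "j < 2*H" by (auto simp: G3)
    have rhs: "G (Suc (Suc (Suc k))) $$ (i,j) = (if i + 1 = g (Suc (Suc (Suc k))) (j+1) then 1 else 0)"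
      using ij by (simp add: G3)
    show "N_mat (Suc (Suc (Suc k))) $$ (i, j) = G (Suc (Suc (Suc k))) $$ (i, j)"
    proof (cases "j < H")
      case True
      have "g (Suc (Suc (Suc k))) (j+1) = 2*H - j" using True g3[of "j+1"] by (simp del: g.simps)
      then show ?thesis unfolding rhs N3 using ij True
        by (auto simp: G1 anti_id_def HQ)
    next
      case jH: False
      define b where "b = j - H"
      have b: "b < 2*Q" "j = H + b" using ij jH by (auto simp: b_def HQ)
      have gj: "g (Suc (Suc (Suc k))) (j+1) = g (Suc (Suc k)) (H - b)"
        using g3[of "j+1"] b HQ by (simp del: g.simps)
      show ?thesis
      proof (cases "b < Q")
        case True
        have nle: "\<not> (H - b \<le> Q)" "H+1-(H-b) = b+1" using True HQ by auto
        have e: "g (Suc (Suc (Suc k))) (j+1) = g (Suc k) (b+1)"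
          using gj g2[of "H-b"] nle by (simp del: g.simps)
        have rng: "g (Suc k) (b+1) \<in> {1..Q}" using g_range[of "b+1" "Suc k"] True
          by (auto simp: Q_def)
        show ?thesis unfolding rhs N3 e using ij True b rng
          by (auto simp: G1 anti_id_def HQ)
      next
        case False
        have nle: "H - b \<le> Q" "H+1-(H-b) = b+1" using False b HQ by auto
        have e: "g (Suc (Suc (Suc k))) (j+1) = b+1"
          using gj g2[of "H-b"] nle by (simp del: g.simps)
        show ?thesis unfolding rhs N3 e using ij False b
          by (auto simp: G1 anti_id_def HQ)
      qed
    qed
  qed
qed

lemma N_G: "k \<ge> 1 \<Longrightarrow> N_mat k = G k"
proof (induction k rule: less_induct)
  case (less k)
  show ?case
  proof (cases "k \<le> 2")
    case True
    then have "k = 1 \<or> k = 2" using less.prems by auto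
    then show ?thesis using N_G1 N_G2 by auto
  next
    case False
    define m where "m = k - 3"
    have m: "k = Suc (Suc (Suc m))" using False unfolding m_def by arith
    have "N_mat (Suc m) = G (Suc m)" by (rule less.IH) (use m in auto)
    then show ?thesis using N_G_step m by simp
  qed
qed

theorem theorem3:
  fixes k :: nat
  assumes "k \<ge> 1"
  shows "P_mat k = N_mat k"
  using P_G N_G assms by simp

end
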